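(* Let $n\ge 1$, $s\ge 1$, and let $A,B_1,\dots,B_s$ be real symmetric $n\times n$ matrices. Let $\mathcal{L}$ be the real Lie algebra generated by $A,B_1,\dots,B_s$, and let $\hat{\mathcal{L}}$ be the smallest ideal of $\mathcal{L}$ containing $B_1,\dots,B_s$. If $\mathcal{L}=gl(n,\mathbb{R})$ and $\operatorname{tr} B_k\neq 0$ for some $k\in\{1,\dots,s\}$, then $\hat{\mathcal{L}}=gl(n,\mathbb{R})$.
   Context: For matrices $A_1,\dots,A_k\in\mathbb{C}^{n\times n}$, the real Lie algebra generated by them is the smallest real vector space of matrices containing $A_1,\dots,A_k$ and closed under the commutator $[X,Y]=XY-YX$. $gl(n,\mathbb{R})$ denotes the Lie algebra of all real $n\times n$ matrices. *)

theory Defs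
  imports "HOL-Analysis.Analysis"
begin

definition mcomm :: "real^'n^'n \<Rightarrow> real^'n^'n \<Rightarrow> real^'n^'n" where
  "mcomm X Y = X ** Y - Y ** X"

definition lie_generated :: "(real^'n^'n) set \<Rightarrow> (real^'n^'n) set" where
  "lie_generated S = \<Inter>{L. S \<subseteq> L \<and> subspace L \<and> (\<forall>X\<in>L. \<forall>Y\<in>L. mcomm X Y \<in> L)}"

definition lie_ideal_generated :: "(real^'n^'n) set \<Rightarrow> (real^'n^'n) set \<Rightarrow> (real^'n^'n) set" where
  "lie_ideal_generated L T = \<Inter>{I. T \<subseteq> I \<and> subspace I \<and> I \<subseteq> L \<and> (\<forall>X\<in>L. \<forall>Y\<in>I. mcomm X Y \<in> I)}"

end

theory Submission
  imports Defs
begin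

lemma full_if_perp:
  fixes J :: "(real^'n^'n) set"
  assumes "subspace J" and "\<And>Z. (\<forall>X\<in>J. Z \<bullet> X = 0) \<Longrightarrow> Z = 0"
  shows "J = UNIV"
proof (rule ccontr)
  assume ne: "J \<noteq> UNIV"
  have sp: "span J = J" using assms(1) by (simp add: span_eq_iff)
  have "dim J \<noteq> DIM(real^'n^'n)" using ne sp dim_eq_full by metis
  moreover have "dim J \<le> DIM(real^'n^'n)" by (metis dim_subset_UNIV)
  ultimately have "dim J < DIM(real^'n^'n)" by linarith
  then obtain a where "a \<noteq> 0" "span J \<subseteq> {x. a \<bullet> x = 0}" using lowdim_subset_hyperplane by blast
  then show False using assms(2)[of a] sp span_superset by blast
qed

definition E :: "'n \<Rightarrow> 'n \<Rightarrow> real^'n^'n" where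
  "E i j = (\<chi> p q. if p = i \<and> q = j then 1 else 0)"

lemma E_nth [simp]: "E i j $ p $ q = (if p = i \<and> q = j then 1 else 0)"
  by (simp add: E_def)

lemma E_mult_left [simp]: "(E i j ** X) $ p $ q = (if p = i then X$j$q else 0)"
proof -
  have "(E i j ** X) $ p $ q = (\<Sum>k\<in>UNIV. if k = j then (if p = i then X$k$q else 0) else 0)"
    unfolding matrix_matrix_mult_def vec_lambda_beta by (rule sum.cong) auto
  then show ?thesis by simp
qed

lemma E_mult_right [simp]: "(X ** E i j) $ p $ q = (if q = j then X$p$i else 0)"
proof -
  have "(X ** E i j) $ p $ q = (\<Sum>k\<in>UNIV. if k = i then (if q = j then X$p$k else 0) else 0)"
    unfolding matrix_matrix_mult_def vec_lambda_beta by (rule sum.cong) auto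
  then show ?thesis by simp
qed

lemma mcommE_left [simp]:
  "mcomm (E i j) X $ p $ q = (if p = i then X$j$q else 0) - (if q = j then X$p$i else 0)"
  by (simp add: mcomm_def)

lemma mcommE_right [simp]:
  "mcomm X (E i j) $ p $ q = (if q = j then X$p$i else 0) - (if p = i then X$j$q else 0)"
  by (simp add: mcomm_def)

lemma inner_comm:
  fixes Z X :: "real^'n^'n"
  shows "Z \<bullet> mcomm (E p q) X = (X ** transpose Z)$q$p - (transpose Z ** X)$q$p"
proof -
  have "Z \<bullet> mcomm (E p q) X = (\<Sum>i\<in>UNIV. \<Sum>j\<in>UNIV. Z$i$j * ((if i = p then X$q$j else 0) - (if j = q then X$i$p else 0)))"
    by (simp add: inner_vec_def)
  also have "\<dots> = (\<Sum>i\<in>UNIV. (if i = p then (\<Sum>j\<in>UNIV. Z$i$j * X$q$j) else 0) - Z$i$q * X$i$p)"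
    by (rule sum.cong) (auto simp: right_diff_distrib sum_subtractf if_distrib[of "\<lambda>x. _ * x"] cong: if_cong)
  also have "\<dots> = (\<Sum>j\<in>UNIV. Z$p$j * X$q$j) - (\<Sum>i\<in>UNIV. Z$i$q * X$i$p)"
    by (simp add: sum_subtractf)
  finally show ?thesis by (simp add: matrix_matrix_mult_def transpose_def mult.commute)
qed


lemma offdiag_E:
  fixes J :: "(real^'n^'n) set"
  assumes sub: "subspace J" and cl: "\<And>X Y. Y \<in> J \<Longrightarrow> mcomm X Y \<in> J"
    and M: "M \<in> J" and ab: "a \<noteq> b" and nz: "M$a$b \<noteq> 0"
  shows "E a b \<in> J"
proof -
  define P where "P = mcomm (E a a) (mcomm (E b b) M)"
  define R where "R = mcomm (E a a) P"
  have P: "P \<in> J" unfolding P_def using cl M by blast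
  have R: "R \<in> J" unfolding R_def using cl P by blast
  have eq: "E a b = (- 1 / (2 * M$a$b)) *\<^sub>R (P + R)"
    using ab nz by (auto simp: vec_eq_iff P_def R_def field_simps)
  show ?thesis unfolding eq by (rule subspace_scale[OF sub], rule subspace_add[OF sub P R])
qed

lemma all_E:
  fixes J :: "(real^'n^'n) set"
  assumes sub: "subspace J" and cl: "\<And>X Y. Y \<in> J \<Longrightarrow> mcomm X Y \<in> J"
    and Eab: "E a b \<in> J" and ab: "a \<noteq> b" and ij: "i \<noteq> j"
  shows "E i j \<in> J"
proof -
  define P where "P = mcomm (E i a) (mcomm (E b j) (E a b))"
  have P: "P \<in> J" unfolding P_def using cl Eab by blast
  have eq: "E i j = (- (if i = b \<and> j = a then 1/2 else 1)) *\<^sub>R P"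
    using ab ij by (auto simp: vec_eq_iff P_def)
  show ?thesis unfolding eq by (rule subspace_scale[OF sub P])
qed

lemma key:
  fixes J :: "(real^'n^'n) set"
  assumes sub: "subspace J" and cl: "\<And>X Y. Y \<in> J \<Longrightarrow> mcomm X Y \<in> J"
    and B: "B \<in> J" and tr: "trace B \<noteq> 0"
    and H: "\<And>i j. i \<noteq> j \<Longrightarrow> E i j \<in> J"
  shows "J = UNIV"
proof (rule full_if_perp[OF sub])
  fix Z :: "real^'n^'n"
  assume perp: "\<forall>X\<in>J. Z \<bullet> X = 0"
  define W where "W = transpose Z"
  have C: "(X ** W)$q$p = (W ** X)$q$p" if "X \<in> J" for X p q
    using perp cl[OF that, of "E p q"] inner_comm[of Z p q X] unfolding W_def by auto
  have off: "Z$p$q = 0" if "p \<noteq> q" for p q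
    using C[OF H[OF that], of q q] that by (simp add: W_def transpose_def)
  have dg: "Z$p$p = Z$q$q" for p q
  proof (cases "p = q")
    case False
    then show ?thesis using C[OF H[OF False], of p q] C[OF H[OF False], of q p] by (simp add: W_def transpose_def)
  qed simp
  obtain a :: 'n where True by blast
  have "Z \<bullet> B = (\<Sum>i\<in>UNIV. \<Sum>j\<in>UNIV. Z$i$j * B$i$j)"
    by (simp add: inner_vec_def)
  also have "\<dots> = (\<Sum>i\<in>UNIV. Z$a$a * B$i$i)"
  proof (rule sum.cong)
    fix i
    have "(\<Sum>j\<in>UNIV. Z$i$j * B$i$j) = (\<Sum>j\<in>UNIV. if j = i then Z$a$a * B$i$j else 0)"
      by (rule sum.cong) (auto simp: off dg[of i a])
    then show "(\<Sum>j\<in>UNIV. Z$i$j * B$i$j) = Z$a$a * B$i$i" by simp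
  qed simp
  also have "\<dots> = Z$a$a * trace B" by (simp add: trace_def sum_distrib_left)
  finally have "Z$a$a * trace B = 0" using perp B by simp
  then have "Z$a$a = 0" using tr by simp
  then show "Z = 0" using off dg[of _ a] by (metis vec_eq_iff zero_index)
qed


lemma matrix_add_rdistrib': "((A + B) ** C) = (A ** C) + (B ** C)"
  by (vector matrix_matrix_mult_def sum.distrib[symmetric] field_simps)

lemma comm_K:
  fixes A :: "real^'n^'n"
  shows "mcomm (x *\<^sub>R A + y *\<^sub>R mat 1) (u *\<^sub>R A + v *\<^sub>R mat 1) = 0"
  by (simp add: mcomm_def matrix_add_ldistrib matrix_add_rdistrib' matrix_scalar_ac
      scalar_matrix_assoc[symmetric] algebra_simps)

theorem lemma2p2:
  fixes A :: "real^'n^'n" and B :: "nat \<Rightarrow> real^'n^'n" and s :: nat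
  assumes "s \<ge> 1"
    and "transpose A = A"
    and "\<forall>k\<in>{1..s}. transpose (B k) = B k"
    and "lie_generated (insert A (B ` {1..s})) = UNIV"
    and "\<exists>k\<in>{1..s}. trace (B k) \<noteq> 0"
  shows "lie_ideal_generated (lie_generated (insert A (B ` {1..s}))) (B ` {1..s}) = UNIV"
proof -
  define T where "T = B ` {1..s}"
  define J where "J = lie_ideal_generated (UNIV :: (real^'n^'n) set) T"
  have LU: "lie_generated (insert A T) = UNIV" using assms(4) by (simp add: T_def)
  have sub: "subspace J" unfolding J_def lie_ideal_generated_def
    by (rule subspace_Inter) blast
  have TJ: "T \<subseteq> J" unfolding J_def lie_ideal_generated_def by blast
  have cl: "mcomm X Y \<in> J" if "Y \<in> J" for X Y
    using that unfolding J_def lie_ideal_generated_def by blast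
  obtain k0 where k0: "k0 \<in> {1..s}" "trace (B k0) \<noteq> 0" using assms(5) by blast
  have Bk0: "B k0 \<in> J" using TJ k0 unfolding T_def by blast
  have H: "E i j \<in> J" if ij: "i \<noteq> j" for i j
  proof (cases "\<exists>k\<in>{1..s}. \<exists>a b. a \<noteq> b \<and> (B k$a$b \<noteq> 0 \<or> B k$a$a \<noteq> B k$b$b)")
    case True
    then obtain k a b where k: "k \<in> {1..s}" and ab: "a \<noteq> b"
      and alt: "B k$a$b \<noteq> 0 \<or> B k$a$a \<noteq> B k$b$b" by blast
    have Bk: "B k \<in> J" using TJ k unfolding T_def by blast
    obtain M where M: "M \<in> J" "M$a$b \<noteq> 0"
    proof (cases "B k$a$b \<noteq> 0")
      case True then show ?thesis using that Bk by blast
    next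
      case False
      then have "B k$a$a \<noteq> B k$b$b" using alt by blast
      then have "mcomm (E a b) (B k) $a$b \<noteq> 0" by simp
      then show ?thesis using that cl[OF Bk] by blast
    qed
    have "E a b \<in> J" by (rule offdiag_E[OF sub cl M(1) ab M(2)])
    then show ?thesis using all_E[OF sub cl _ ab ij] by blast
  next
    case False
    obtain a :: 'n where True by blast
    define K where "K = {X. \<exists>x y. X = x *\<^sub>R A + y *\<^sub>R mat 1}"
    have scal: "B k = (B k$a$a) *\<^sub>R mat 1" if "k \<in> {1..s}" for k
    proof -
      have h: "p \<noteq> q \<Longrightarrow> B k$p$q = 0 \<and> B k$p$p = B k$q$q" for p q using False that by blast
      have ee: "B k$p$q = (if p = q then B k$a$a else 0)" for p q
      proof (cases "p = q")
        case True
        then show ?thesis using h[of p a] by (cases "p = a") simp_all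
      qed (simp add: h)
      show ?thesis unfolding vec_eq_iff
      proof (intro allI)
        fix p q
        show "B k $ p $ q = ((B k$a$a) *\<^sub>R mat 1) $ p $ q"
          by (subst ee[of p q]) (simp add: mat_def)
      qed
    qed
    have GK: "insert A T \<subseteq> K"
    proof
      fix X assume "X \<in> insert A T"
      then show "X \<in> K"
      proof
        assume "X = A" then show ?thesis unfolding K_def by (rule_tac CollectI, rule_tac x=1 in exI, rule_tac x=0 in exI) simp
      next
        assume "X \<in> T"
        then obtain k where "k \<in> {1..s}" "X = B k" unfolding T_def by blast
        then have "X = 0 *\<^sub>R A + (B k$a$a) *\<^sub>R mat 1" using scal by simp
        then show ?thesis unfolding K_def by blast
      qed
    qed
    have subK: "subspace K" unfolding subspace_def K_def
    proof (intro conjI ballI allI)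
      show "0 \<in> {X. \<exists>x y. X = x *\<^sub>R A + y *\<^sub>R mat 1}"
        by (rule CollectI, rule exI[of _ 0], rule exI[of _ 0]) simp
    next
      fix X Y assume "X \<in> {X. \<exists>x y. X = x *\<^sub>R A + y *\<^sub>R mat 1}" "Y \<in> {X. \<exists>x y. X = x *\<^sub>R A + y *\<^sub>R mat 1}"
      then obtain x y u v where "X = x *\<^sub>R A + y *\<^sub>R mat 1" "Y = u *\<^sub>R A + v *\<^sub>R mat 1" by blast
      then have "X + Y = (x + u) *\<^sub>R A + (y + v) *\<^sub>R mat 1" by (simp add: algebra_simps)
      then show "X + Y \<in> {X. \<exists>x y. X = x *\<^sub>R A + y *\<^sub>R mat 1}" by blast
    next
      fix c :: real and X assume "X \<in> {X. \<exists>x y. X = x *\<^sub>R A + y *\<^sub>R mat 1}"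
      then obtain x y where "X = x *\<^sub>R A + y *\<^sub>R mat 1" by blast
      then have "c *\<^sub>R X = (c * x) *\<^sub>R A + (c * y) *\<^sub>R mat 1" by (simp add: algebra_simps)
      then show "c *\<^sub>R X \<in> {X. \<exists>x y. X = x *\<^sub>R A + y *\<^sub>R mat 1}" by blast
    qed
    have clK: "\<forall>X\<in>K. \<forall>Y\<in>K. mcomm X Y \<in> K"
    proof (intro ballI)
      fix X Y assume "X \<in> K" "Y \<in> K"
      then obtain x y u v where "X = x *\<^sub>R A + y *\<^sub>R mat 1" "Y = u *\<^sub>R A + v *\<^sub>R mat 1"
        unfolding K_def by blast
      then have "mcomm X Y = 0" by (simp add: comm_K)
      then show "mcomm X Y \<in> K" using subK by (simp add: subspace_0)
    qed
    have "lie_generated (insert A T) \<subseteq> K"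
      unfolding lie_generated_def using GK subK clK by blast
    then have UK: "UNIV \<subseteq> K" using LU by simp
    have c0: "mcomm X Y = 0" if XY: "X \<in> K" "Y \<in> K" for X Y
    proof -
      obtain x y u v where "X = x *\<^sub>R A + y *\<^sub>R mat 1" "Y = u *\<^sub>R A + v *\<^sub>R mat 1"
        using XY unfolding K_def by blast
      then show ?thesis by (simp add: comm_K)
    qed
    have "mcomm (E i j) (E j i) = 0" using c0 UK by blast
    then have "mcomm (E i j) (E j i) $ i $ i = 0" by simp
    then have False using ij by simp
    then show ?thesis ..
  qed
  have "J = UNIV" by (rule key[OF sub cl Bk0 k0(2) H])
  then show ?thesis using assms(4) by (simp add: J_def T_def)
qed

end
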